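(* Let $G$ be a finite group of order $2^n$ with $n\ge2$, having normal subgroups $H_1$ and $H_2$ such that $G/H_1\cong(\mathbb{Z}/2\mathbb{Z})^{\oplus(n-2)}$ and $G/H_2\cong\mathbb{Z}/4\mathbb{Z}$. Then every subgroup of $H_1$ is normal in $G$. *)

theory Defs
  imports "HOL-Algebra.Algebra"
begin

end

theory Submission
  imports Defs
begin

lemma quot_hom:
  fixes G (structure)
  assumes G: "group G" and N: "N \<lhd> G" and A: "group A" and phi: "\<phi> \<in> iso (G Mod N) A"
  shows "(\<lambda>x. \<phi> (N #>\<^bsub>G\<^esub> x)) \<in> hom G A"
    and "\<And>x. x \<in> carrier G \<Longrightarrow> \<phi> (N #>\<^bsub>G\<^esub> x) = \<one>\<^bsub>A\<^esub> \<longleftrightarrow> x \<in> N"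
    and "(\<lambda>x. \<phi> (N #>\<^bsub>G\<^esub> x)) ` carrier G = carrier A"
proof -
  interpret group G by fact
  interpret normal N G by fact
  have FG: "group (G Mod N)" by (rule factorgroup_is_group)
  have ph: "\<phi> \<in> hom (G Mod N) A" using phi by (simp add: iso_def)
  show "(\<lambda>x. \<phi> (N #>\<^bsub>G\<^esub> x)) \<in> hom G A"
  proof (rule homI)
    fix x assume "x \<in> carrier G"
    then show "\<phi> (N #> x) \<in> carrier A" using ph by (auto simp: hom_def carrier_FactGroup)
  next
    fix x y assume x: "x \<in> carrier G" and y: "y \<in> carrier G"
    have "\<phi> (N #> (x \<otimes> y)) = \<phi> ((N #> x) <#> (N #> y))" using rcos_sum[OF x y] by simp
    also have "\<dots> = \<phi> (N #> x) \<otimes>\<^bsub>A\<^esub> \<phi> (N #> y)"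
      using hom_mult[OF ph, of "N #> x" "N #> y"] x y by (simp add: carrier_FactGroup)
    finally show "\<phi> (N #> (x \<otimes> y)) = \<phi> (N #> x) \<otimes>\<^bsub>A\<^esub> \<phi> (N #> y)" .
  qed
  have one: "\<phi> N = \<one>\<^bsub>A\<^esub>" using hom_one[OF ph FG A] by simp
  have injN: "inj_on \<phi> (carrier (G Mod N))" using phi by (simp add: iso_def bij_betw_def)
  have Nc: "N \<in> carrier (G Mod N)" using FG by (metis monoid.one_closed group.is_monoid one_FactGroup)
  fix x assume x: "x \<in> carrier G"
  have xc: "N #> x \<in> carrier (G Mod N)" using x by (simp add: carrier_FactGroup)
  show "\<phi> (N #>\<^bsub>G\<^esub> x) = \<one>\<^bsub>A\<^esub> \<longleftrightarrow> x \<in> N"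
  proof
    assume "\<phi> (N #> x) = \<one>\<^bsub>A\<^esub>"
    then have "N #> x = N" using inj_onD[OF injN _ xc Nc] one by simp
    then show "x \<in> N" using rcos_self[OF x subgroup_axioms] by simp
  next
    assume "x \<in> N" then show "\<phi> (N #> x) = \<one>\<^bsub>A\<^esub>" using coset_join2[OF x subgroup_axioms] one by simp
  qed
next
  interpret group G by fact
  interpret normal N G by fact
  have "\<phi> ` carrier (G Mod N) = carrier A" using phi by (simp add: iso_def bij_betw_def)
  then show "(\<lambda>x. \<phi> (N #>\<^bsub>G\<^esub> x)) ` carrier G = carrier A"
    by (simp add: carrier_FactGroup image_image)
qed

lemma comm_ker:
  fixes G (structure)
  assumes G: "group G" and A: "comm_group A" and h: "\<psi> \<in> hom G A"
    and x: "x \<in> carrier G" and y: "y \<in> carrier G"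
  shows "\<psi> (x \<otimes> y \<otimes> inv x \<otimes> inv y) = \<one>\<^bsub>A\<^esub>"
proof -
  interpret A: comm_group A by fact
  interpret group_hom G A \<psi> using G h by (simp add: group_hom_def group_hom_axioms_def A.is_group)
  have a: "\<psi> x \<in> carrier A" "\<psi> y \<in> carrier A" using x y by auto
  have "\<psi> (x \<otimes> y \<otimes> inv x \<otimes> inv y) = \<psi> x \<otimes>\<^bsub>A\<^esub> \<psi> y \<otimes>\<^bsub>A\<^esub> inv\<^bsub>A\<^esub> \<psi> x \<otimes>\<^bsub>A\<^esub> inv\<^bsub>A\<^esub> \<psi> y"
    using x y by simp
  also have "\<dots> = (\<psi> x \<otimes>\<^bsub>A\<^esub> inv\<^bsub>A\<^esub> \<psi> x) \<otimes>\<^bsub>A\<^esub> (\<psi> y \<otimes>\<^bsub>A\<^esub> inv\<^bsub>A\<^esub> \<psi> y)"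
    using a by (metis A.m_comm A.m_assoc A.inv_closed A.m_closed)
  also have "\<dots> = \<one>\<^bsub>A\<^esub>" using a by (metis A.r_inv A.r_one A.one_closed)
  finally show ?thesis .
qed

lemma P_props:
  fixes f g :: "nat \<Rightarrow> int" and m :: nat
  defines "P \<equiv> product_group {..<m} (\<lambda>_. integer_mod_group 2)"
  shows "comm_group P" and "f \<in> carrier P \<Longrightarrow> f \<otimes>\<^bsub>P\<^esub> f = \<one>\<^bsub>P\<^esub>"
    and "card (carrier P) = 2 ^ m"
proof -
  have gP: "group P" unfolding P_def by simp
  show "comm_group P"
  proof (rule group.group_comm_groupI[OF gP])
    fix x y assume "x \<in> carrier P" "y \<in> carrier P"
    then show "x \<otimes>\<^bsub>P\<^esub> y = y \<otimes>\<^bsub>P\<^esub> x" unfolding P_def by (simp add: add.commute)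
  qed
  show "f \<in> carrier P \<Longrightarrow> f \<otimes>\<^bsub>P\<^esub> f = \<one>\<^bsub>P\<^esub>"
  proof -
    assume f: "f \<in> carrier P"
    have "\<And>i. i < m \<Longrightarrow> (f i + f i) mod 2 = 0"
    proof -
      fix i assume "i < m"
      then have "f i \<in> {0..<2}" using f unfolding P_def by (auto simp: carrier_integer_mod_group PiE_def Pi_def)
      then show "(f i + f i) mod 2 = 0" by auto
    qed
    then show ?thesis unfolding P_def by (auto simp: fun_eq_iff)
  qed
  show "card (carrier P) = 2 ^ m" unfolding P_def
    by (simp add: card_PiE carrier_integer_mod_group)
qed

lemma (in group) comm_decomp:
  assumes "x \<in> carrier G" "y \<in> carrier G"
  shows "x \<otimes> y = (x \<otimes> y \<otimes> inv x \<otimes> inv y) \<otimes> (y \<otimes> x)"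
proof -
  have "inv x \<otimes> (inv y \<otimes> (y \<otimes> x)) = \<one>" using assms by (simp add: m_assoc[symmetric])
  then show ?thesis using assms by (simp add: m_assoc)
qed

lemma (in group) central_normal:
  assumes "subgroup K G" "K \<subseteq> H" "\<forall>h\<in>H. \<forall>x\<in>carrier G. x \<otimes> h = h \<otimes> x"
  shows "K \<lhd> G"
proof -
  have "\<forall>x\<in>carrier G. \<forall>h\<in>K. x \<otimes> h \<otimes> inv x \<in> K"
  proof (intro ballI)
    fix x h assume x: "x \<in> carrier G" and h: "h \<in> K"
    have hc: "h \<in> carrier G" using h assms(1) subgroup.subset by blast
    have "x \<otimes> h = h \<otimes> x" using assms h x by blast
    then have "x \<otimes> h \<otimes> inv x = h" using x hc by (simp add: m_assoc)
    then show "x \<otimes> h \<otimes> inv x \<in> K" using h by simp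
  qed
  then show ?thesis using normal_inv_iff assms(1) by blast
qed

theorem lemma4p2:
  fixes G (structure) and H1 H2 :: "'a set" and n :: nat
  assumes "group G"
    and "finite (carrier G)"
    and "order G = 2 ^ n"
    and "n \<ge> 2"
    and "H1 \<lhd> G" and "H2 \<lhd> G"
    and "G Mod H1 \<cong> product_group {..<n - 2} (\<lambda>_. integer_mod_group 2)"
    and "G Mod H2 \<cong> integer_mod_group 4"
  shows "\<forall>K. subgroup K G \<and> K \<subseteq> H1 \<longrightarrow> K \<lhd> G"
proof -
  interpret group G by fact
  define P where "P = product_group {..<n - 2} (\<lambda>_. integer_mod_group 2)"
  define Z where "Z = integer_mod_group 4"
  have gP: "group P" and cP: "comm_group P" unfolding P_def by (simp_all add: P_props)
  have gZ: "group Z" and cZ: "comm_group Z" unfolding Z_def by simp_all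
  have subH1: "subgroup H1 G" using assms(5) normal_imp_subgroup by blast
  have subH2: "subgroup H2 G" using assms(6) normal_imp_subgroup by blast
  obtain \<phi>1 where phi1: "\<phi>1 \<in> iso (G Mod H1) P" using assms(7) unfolding is_iso_def P_def by blast
  obtain \<phi>2 where phi2: "\<phi>2 \<in> iso (G Mod H2) Z" using assms(8) unfolding is_iso_def Z_def by blast
  define \<psi>1 where "\<psi>1 = (\<lambda>x. \<phi>1 (H1 #> x))"
  define \<psi>2 where "\<psi>2 = (\<lambda>x. \<phi>2 (H2 #> x))"
  have h1: "\<psi>1 \<in> hom G P" and k1: "\<And>x. x \<in> carrier G \<Longrightarrow> \<psi>1 x = \<one>\<^bsub>P\<^esub> \<longleftrightarrow> x \<in> H1"
    using quot_hom[OF assms(1) assms(5) gP phi1] unfolding \<psi>1_def by auto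
  have h2: "\<psi>2 \<in> hom G Z" and k2: "\<And>x. x \<in> carrier G \<Longrightarrow> \<psi>2 x = \<one>\<^bsub>Z\<^esub> \<longleftrightarrow> x \<in> H2"
    and s2: "\<psi>2 ` carrier G = carrier Z"
    using quot_hom[OF assms(1) assms(6) gZ phi2] unfolding \<psi>2_def by auto
  have sq: "x \<otimes> x \<in> H1" if x: "x \<in> carrier G" for x
  proof -
    have "\<psi>1 (x \<otimes> x) = \<psi>1 x \<otimes>\<^bsub>P\<^esub> \<psi>1 x" using hom_mult[OF h1 x x] .
    also have "\<dots> = \<one>\<^bsub>P\<^esub>" using P_props(2) h1 x unfolding P_def by (auto simp: hom_def)
    finally show ?thesis using k1 x by blast
  qed
  have c1: "x \<otimes> y \<otimes> inv x \<otimes> inv y \<in> H1" if "x \<in> carrier G" "y \<in> carrier G" for x y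
    using comm_ker[OF assms(1) cP h1 that] k1 that by simp
  have c2: "x \<otimes> y \<otimes> inv x \<otimes> inv y \<in> H2" if "x \<in> carrier G" "y \<in> carrier G" for x y
    using comm_ker[OF assms(1) cZ h2 that] k2 that by simp
  have "1 \<in> carrier Z" unfolding Z_def by simp
  then obtain g where g: "g \<in> carrier G" "\<psi>2 g = 1" using s2 by (metis imageE)
  have "\<psi>2 (g \<otimes> g) = 2" using hom_mult[OF h2 g(1) g(1)] g unfolding Z_def by simp
  then have gg: "g \<otimes> g \<notin> H2" using k2[of "g \<otimes> g"] g unfolding Z_def by simp
  have cardH1: "card H1 = 4"
  proof -
    have "card (carrier (G Mod H1)) = 2 ^ (n - 2)"
      using iso_same_card[OF assms(7)] P_props(3) by simp
    then have "card (rcosets H1) = 2 ^ (n - 2)" by (simp add: FactGroup_def)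
    then have "2 ^ (n - 2) * card H1 = 2 ^ n" using lagrange[OF subH1] assms(3) by simp
    also have "(2::nat) ^ n = 2 ^ (n - 2) * 4" using assms(4)
      by (metis le_add_diff_inverse2 power_add power2_eq_square mult_2_right numeral_Bit0 numeral_One mult.commute)
    finally show ?thesis by simp
  qed
  have central: "\<forall>h\<in>H1. \<forall>x\<in>carrier G. x \<otimes> h = h \<otimes> x"
  proof (cases "\<forall>x\<in>carrier G. \<forall>y\<in>carrier G. x \<otimes> y \<otimes> inv x \<otimes> inv y = \<one>")
    case True
    have "x \<otimes> y = y \<otimes> x" if "x \<in> carrier G" "y \<in> carrier G" for x y
      using comm_decomp[OF that] True that by simp
    then show ?thesis using subH1 subgroup.subset by blast
  next
    case False
    then obtain x0 y0 where xy0: "x0 \<in> carrier G" "y0 \<in> carrier G"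
      and w1: "x0 \<otimes> y0 \<otimes> inv x0 \<otimes> inv y0 \<noteq> \<one>" by blast
    define w where "w = x0 \<otimes> y0 \<otimes> inv x0 \<otimes> inv y0"
    have wH1: "w \<in> H1" and wH2: "w \<in> H2" and w1: "w \<noteq> \<one>" using c1 c2 xy0 w1 unfolding w_def by auto
    have wG: "w \<in> carrier G" using wH1 subgroup.subset[OF subH1] by blast
    define s where "s = g \<otimes> g"
    have sG: "s \<in> carrier G" using g unfolding s_def by simp
    have sH1: "s \<in> H1" using sq g unfolding s_def by simp
    have sH2: "s \<notin> H2" using gg unfolding s_def by simp
    have swH1: "s \<otimes> w \<in> H1" using subgroup.m_closed[OF subH1 sH1 wH1] .
    have swH2: "s \<otimes> w \<notin> H2"
    proof
      assume "s \<otimes> w \<in> H2"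
      have "s \<otimes> w \<otimes> inv w \<in> H2" using subgroup.m_closed[OF subH2 \<open>s \<otimes> w \<in> H2\<close> subgroup.m_inv_closed[OF subH2 wH2]] .
      then show False using sH2 sG wG by (simp add: m_assoc)
    qed
    have oneH2: "\<one> \<in> H2" using subgroup.one_closed[OF subH2] .
    have sw_ne: "s \<otimes> w \<noteq> s"
    proof
      assume "s \<otimes> w = s"
      then have "s \<otimes> w = s \<otimes> \<one>" using sG by simp
      then show False using l_cancel[where c=s and a=w and b=\<one>] one_closed sG wG w1 by simp
    qed
    have sub: "{\<one>, w, s, s \<otimes> w} \<subseteq> H1" using wH1 sH1 swH1 subgroup.one_closed[OF subH1] by simp
    have c4: "card {\<one>, w, s, s \<otimes> w} = 4"
    proof -
      have d: "\<one> \<noteq> s" "w \<noteq> s" "\<one> \<noteq> s \<otimes> w" "w \<noteq> s \<otimes> w"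
        using sH2 swH2 oneH2 wH2 by metis+
      show ?thesis using d w1 sw_ne by (simp add: eq_commute)
    qed
    have finH1: "finite H1" using assms(2) subgroup.subset[OF subH1] finite_subset by blast
    have H1eq: "H1 = {\<one>, w, s, s \<otimes> w}"
      using card_subset_eq[OF finH1 sub] c4 cardH1 by simp
    have D: "z = \<one> \<or> z = w" if "z \<in> H1" "z \<in> H2" for z
      using that H1eq sH2 swH2 by auto
    have ww: "w \<otimes> w = \<one>"
    proof -
      have "w \<otimes> w \<in> H1" "w \<otimes> w \<in> H2" using subgroup.m_closed[OF subH1 wH1 wH1] subgroup.m_closed[OF subH2 wH2 wH2] by auto
      then have "w \<otimes> w = \<one> \<or> w \<otimes> w = w" using D by blast
      moreover have "w \<otimes> w \<noteq> w"
      proof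
        assume "w \<otimes> w = w"
        then have "w \<otimes> w = w \<otimes> \<one>" using wG by simp
        then show False using l_cancel[where c=w and a=w and b=\<one>] one_closed wG wG w1 by simp
      qed
      ultimately show ?thesis by blast
    qed
    have wc: "x \<otimes> w = w \<otimes> x" if x: "x \<in> carrier G" for x
    proof -
      have "x \<otimes> w \<otimes> inv x \<in> H1" using assms(5) normal_inv_iff x wH1 by blast
      moreover have "x \<otimes> w \<otimes> inv x \<in> H2" using assms(6) normal_inv_iff x wH2 by blast
      ultimately have "x \<otimes> w \<otimes> inv x = \<one> \<or> x \<otimes> w \<otimes> inv x = w" using D by blast
      moreover have "x \<otimes> w \<otimes> inv x \<noteq> \<one>"
      proof
        assume "x \<otimes> w \<otimes> inv x = \<one>"
        then have "x \<otimes> w \<otimes> inv x \<otimes> x = \<one> \<otimes> x" by simp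
        then have "x \<otimes> w = x \<otimes> \<one>" using x wG by (simp add: m_assoc)
        then show False using l_cancel[where c=x and a=w and b=\<one>] one_closed x wG w1 by simp
      qed
      ultimately have "x \<otimes> w \<otimes> inv x = w" by blast
      then have "x \<otimes> w \<otimes> inv x \<otimes> x = w \<otimes> x" by simp
      then show ?thesis using x wG by (simp add: m_assoc)
    qed
    have cc: "z \<otimes> (x \<otimes> y \<otimes> inv x \<otimes> inv y) = (x \<otimes> y \<otimes> inv x \<otimes> inv y) \<otimes> z
              \<and> (x \<otimes> y \<otimes> inv x \<otimes> inv y) \<otimes> (x \<otimes> y \<otimes> inv x \<otimes> inv y) = \<one>"
      if "x \<in> carrier G" "y \<in> carrier G" "z \<in> carrier G" for x y z
    proof -
      have "x \<otimes> y \<otimes> inv x \<otimes> inv y = \<one> \<or> x \<otimes> y \<otimes> inv x \<otimes> inv y = w"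
        using D c1 c2 that by blast
      then show ?thesis using wc ww that by auto
    qed
    have sc: "x \<otimes> s = s \<otimes> x" if x: "x \<in> carrier G" for x
    proof -
      define d where "d = x \<otimes> g \<otimes> inv x \<otimes> inv g"
      have dG: "d \<in> carrier G" unfolding d_def using x g by simp
      have dz: "\<And>z. z \<in> carrier G \<Longrightarrow> z \<otimes> d = d \<otimes> z" and dd: "d \<otimes> d = \<one>"
        using cc[OF x g(1)] unfolding d_def by auto
      have xg: "x \<otimes> g = d \<otimes> (g \<otimes> x)" using comm_decomp[OF x g(1)] unfolding d_def .
      have "x \<otimes> s = (x \<otimes> g) \<otimes> g" unfolding s_def using x g by (simp add: m_assoc)
      also have "\<dots> = d \<otimes> g \<otimes> (x \<otimes> g)" using xg x g dG by (simp add: m_assoc)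
      also have "\<dots> = d \<otimes> g \<otimes> (d \<otimes> (g \<otimes> x))" using xg by simp
      also have "\<dots> = d \<otimes> (g \<otimes> d) \<otimes> (g \<otimes> x)" using x g dG by (simp add: m_assoc)
      also have "\<dots> = d \<otimes> (d \<otimes> g) \<otimes> (g \<otimes> x)" using dz g by simp
      also have "\<dots> = (d \<otimes> d) \<otimes> (g \<otimes> g) \<otimes> x" using x g dG by (simp add: m_assoc)
      also have "\<dots> = s \<otimes> x" using dd g unfolding s_def by simp
      finally show ?thesis .
    qed
    show ?thesis
    proof (intro ballI)
      fix h x assume h: "h \<in> H1" and x: "x \<in> carrier G"
      have "h = \<one> \<or> h = w \<or> h = s \<or> h = s \<otimes> w" using h H1eq by auto
      then show "x \<otimes> h = h \<otimes> x"
      proof (elim disjE)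
        assume "h = s \<otimes> w"
        then show ?thesis using sc wc x sG wG by (metis m_assoc)
      qed (use x sc wc in auto)
    qed
  qed
  show ?thesis using central_normal central by blast
qed

end
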